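(* For all integers $n\ge1$ and $i\ge1$, $[a_n,e_i^{-1}]\in\mathcal A$, and $$[a_n,e_i^{-1}]\equiv a_{n+i}(\bar n)\pmod{t^{n+i+1}},$$ where $\bar n\in\{0,1\}$ with $\bar n\equiv n\pmod 2$; that is, $[a_n,e_i^{-1}]=(g,t)$ with $g\equiv 1+\bar n\,t^{n+i}\pmod{t^{n+i+1}}$.
   Context: Work in the Riordan group $\mathcal R(\mathbb F_2)$ of pairs $(g,f)$ of formal power series over $\mathbb F_2$ with $g=1+\cdots$, $f=t+\cdots$, with product $(g_1,f_1)(g_2,f_2)=(g_1\cdot(g_2\circ f_1),\,f_2\circ f_1)$. $\mathcal A=\{(g,t)\}$ is the Appell subgroup. For $k\ge1$, $a_k(\beta)=(1+\beta t^k,t)$ for $\beta\in\mathbb F_2$, $a_k=a_k(1)$, and $e_i=(1,t+t^{i+1})$. The commutator is $[x,y]=x^{-1}y^{-1}xy$. *)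

theory Defs
  imports "HOL-Computational_Algebra.Formal_Power_Series" "HOL-Library.Z2"
begin

text \<open>Riordan group over F_2 (type bit). A pair (g,f) with g = 1 + ..., f = t + ... .
  Note: (a oo b) is the composition a(b(t)).\<close>

type_synonym riordan = "bit fps \<times> bit fps"

definition riordan_set :: "riordan set" where
  "riordan_set = {(g, f). fps_nth g 0 = 1 \<and> fps_nth f 0 = 0 \<and> fps_nth f 1 = 1}"

definition rmult :: "riordan \<Rightarrow> riordan \<Rightarrow> riordan" where
  "rmult x y = (fst x * (fst y oo snd x), snd y oo snd x)"

definition rone :: riordan where
  "rone = (1, fps_X)"

definition rinv :: "riordan \<Rightarrow> riordan" where
  "rinv x = (THE y. y \<in> riordan_set \<and> rmult x y = rone)"

definition rcomm :: "riordan \<Rightarrow> riordan \<Rightarrow> riordan" where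
  "rcomm x y = rmult (rmult (rmult (rinv x) (rinv y)) x) y"

definition appell :: "riordan set" where
  "appell = {(g, f). (g, f) \<in> riordan_set \<and> f = fps_X}"

definition aa :: "nat \<Rightarrow> bit \<Rightarrow> riordan" where
  "aa k \<beta> = (1 + fps_const \<beta> * fps_X ^ k, fps_X)"

definition ee :: "nat \<Rightarrow> riordan" where
  "ee i = (1, fps_X + fps_X ^ (i + 1))"

end

theory Submission
  imports Defs
begin

lemma fps_inv_0: "fps_nth (fps_inv (f::'a::field fps)) 0 = 0"
  by (simp add: fps_inv_def)

lemma fps_inv_1: "fps_nth f (Suc 0) = (1::'a::field) \<Longrightarrow> fps_nth (fps_inv f) (Suc 0) = 1"
  by (simp add: fps_inv_def)

lemma rinv_eq:
  assumes "(g, f) \<in> riordan_set"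
  shows "rinv (g, f) = (inverse g oo fps_inv f, fps_inv f)"
proof -
  have g0: "fps_nth (g) 0 = 1" and f0: "fps_nth (f) 0 = 0" and f1: "fps_nth (f) 1 = 1"
    using assms by (auto simp: riordan_set_def)
  let ?y = "(inverse g oo fps_inv f, fps_inv f)"
  have fi: "f oo fps_inv f = fps_X" using fps_inv_right[of f] f0 f1 by simp
  have fi': "fps_inv f oo f = fps_X" using fps_inv[of f] f0 f1 by simp
  have P: "?y \<in> riordan_set \<and> rmult (g, f) ?y = rone"
  proof
    show "?y \<in> riordan_set"
      using g0 f1 by (simp add: riordan_set_def fps_inv_0 fps_inv_1)
    have "inverse g oo fps_inv f oo f = inverse g"
      by (simp add: fps_compose_assoc[symmetric] f0 fps_inv_0 fi')
    then show "rmult (g, f) ?y = rone"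
      using g0 fi' inverse_mult_eq_1'[of g] by (simp add: rmult_def rone_def)
  qed
  have U: "y = ?y" if "y \<in> riordan_set \<and> rmult (g, f) y = rone" for y
  proof -
    obtain h k where y: "y = (h, k)" by fastforce
    have e1: "g * (h oo f) = 1" and e2: "k oo f = fps_X"
      using that y by (auto simp: rmult_def rone_def)
    have "k = k oo (f oo fps_inv f)" using fi by simp
    also have "\<dots> = (k oo f) oo fps_inv f"
      by (simp add: fps_compose_assoc f0 fps_inv_0)
    also have "\<dots> = fps_inv f" using e2 by (simp add: fps_inv_0)
    finally have k: "k = fps_inv f" .
    have hf: "h oo f = inverse g" using fps_inverse_unique[OF e1] by simp
    have "h = h oo (f oo fps_inv f)" using fi by simp
    also have "\<dots> = (h oo f) oo fps_inv f"
      by (simp add: fps_compose_assoc f0 fps_inv_0)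
    finally have "h = inverse g oo fps_inv f" using hf by simp
    with k y show ?thesis by simp
  qed
  show ?thesis unfolding rinv_def
    using P U by (rule the_equality)
qed

lemma binom_decomp:
  fixes Y :: "'a::comm_ring_1"
  shows "\<exists>Q. (1 + Y) ^ n = 1 + of_nat n * Y + Y^2 * Q"
proof (induction n)
  case 0
  then show ?case by (intro exI[of _ 0]) simp
next
  case (Suc n)
  then obtain Q where Q: "(1 + Y) ^ n = 1 + of_nat n * Y + Y^2 * Q" by blast
  have "(1 + Y) ^ Suc n = 1 + of_nat (Suc n) * Y + Y^2 * (of_nat n + Q + Y * Q)"
    by (simp add: Q algebra_simps power2_eq_square)
  then show ?case by blast
qed

lemma of_nat_bit: "(of_nat n :: bit) = of_nat (n mod 2)"
proof -
  have "(of_nat n :: bit) = of_nat (2 * (n div 2) + n mod 2)" by simp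
  also have "\<dots> = of_nat (n mod 2)" by (simp only: of_nat_add of_nat_mult) simp
  finally show ?thesis .
qed

theorem lemma9:
  fixes n i :: nat
  assumes "n \<ge> 1" and "i \<ge> 1"
  shows "rcomm (aa n 1) (rinv (ee i)) \<in> appell \<and>
         (\<forall>k < n + i + 1.
            fps_nth (fst (rcomm (aa n 1) (rinv (ee i)))) k = fps_nth (fst (aa (n + i) (of_nat (n mod 2)))) k \<and>
            fps_nth (snd (rcomm (aa n 1) (rinv (ee i)))) k = fps_nth (snd (aa (n + i) (of_nat (n mod 2)))) k)"
proof -
  define A :: "bit fps" where "A = 1 + fps_X ^ n"
  define F :: "bit fps" where "F = fps_X + fps_X ^ (i + 1)"
  have F0: "fps_nth (F) 0 = 0" and F1: "fps_nth (F) 1 = 1" using assms by (auto simp: F_def)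
  have A0: "fps_nth (A) 0 = 1" using assms by (simp add: A_def)
  have a: "aa n 1 = (A, fps_X)" by (simp add: aa_def A_def)
  have aR: "(A, fps_X) \<in> riordan_set" using A0 by (simp add: riordan_set_def)
  have eR: "(1, F) \<in> riordan_set" using F0 F1 by (simp add: riordan_set_def)
  have fpsinvX: "fps_inv (fps_X :: bit fps) = fps_X"
    using fps_inv[of "fps_X :: bit fps"] by simp
  have ia: "rinv (aa n 1) = (inverse A, fps_X)"
    using rinv_eq[OF aR] by (simp add: a fpsinvX)
  have ie: "rinv (ee i) = (1, fps_inv F)"
    using rinv_eq[OF eR] by (simp add: ee_def F_def)
  have ieR: "(1, fps_inv F) \<in> riordan_set"
    using F1 by (simp add: riordan_set_def fps_inv_0 fps_inv_1)
  have iie: "rinv (rinv (ee i)) = (1, F)"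
    using rinv_eq[OF ieR] fps_inv_idempotent[of F] F0 F1 by (simp add: ie)
  have comm: "rcomm (aa n 1) (rinv (ee i)) = (inverse A * (A oo F), fps_X)"
    using ia iie unfolding ie a rcomm_def rmult_def
    using fps_inv_right[of "fps_inv F"] F0 F1 fps_inv_idempotent[of F]
    by (simp add: fps_inv_0 fps_inv_1 a ie)
  obtain Q where Q: "(1 + fps_X ^ i :: bit fps) ^ n = 1 + of_nat n * fps_X ^ i + (fps_X ^ i)^2 * Q"
    using binom_decomp by blast
  have Fx: "F = fps_X * (1 + fps_X ^ i)" by (simp add: F_def algebra_simps)
  have "A oo F = 1 + F ^ n"
    by (simp add: A_def fps_compose_add_distrib fps_X_power_compose F0)
  also have "\<dots> = 1 + fps_X ^ n * (1 + fps_X ^ i) ^ n"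
    by (simp only: Fx power_mult_distrib)
  also have "\<dots> = A + fps_X ^ (n + i) * (of_nat n + fps_X ^ i * Q)"
    unfolding Q A_def by (simp add: algebra_simps power2_eq_square power_add)
  finally have AF: "A oo F = A + fps_X ^ (n + i) * (of_nat n + fps_X ^ i * Q)" .
  define R where "R = inverse A * (of_nat n + fps_X ^ i * Q)"
  have g: "inverse A * (A oo F) = 1 + fps_X ^ (n + i) * R"
    unfolding AF R_def using inverse_mult_eq_1[of A] A0 by (simp add: algebra_simps)
  have R0: "fps_nth R 0 = of_nat n"
    using assms A0 by (simp add: R_def)
  have mem: "rcomm (aa n 1) (rinv (ee i)) \<in> appell"
    unfolding comm g using assms by (simp add: appell_def riordan_set_def fps_X_power_mult_nth)
  have co: "fps_nth (1 + fps_X ^ (n + i) * R) k = fps_nth (1 + fps_const (of_nat (n mod 2)) * fps_X ^ (n + i)) k"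
    if "k < n + i + 1" for k
  proof (cases "k = n + i")
    case True
    then show ?thesis using assms R0 of_nat_bit[of n] by (simp add: fps_X_power_mult_nth)
  next
    case False
    then show ?thesis using assms that by (simp add: fps_X_power_mult_nth)
  qed
  have "fst (rcomm (aa n 1) (rinv (ee i))) = 1 + fps_X ^ (n + i) * R"
    by (simp add: comm g)
  moreover have "snd (rcomm (aa n 1) (rinv (ee i))) = fps_X" by (simp add: comm)
  moreover have "aa (n + i) (of_nat (n mod 2)) = (1 + fps_const (of_nat (n mod 2)) * fps_X ^ (n + i), fps_X)"
    by (simp add: aa_def)
  ultimately show ?thesis using mem co by simp
qed

end
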